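(* For every integer $i>0$, every normal proof of $\varphi_i$ in Prawitz-style Natural Deduction for $\mathbf{M}_{\rightarrow}$ contains at least $2^i$ assumption occurrences of the formula $\xi_i$.
   Context: $\mathbf{M}_{\rightarrow}$ is purely implicational minimal propositional logic: formulas are built from propositional letters using only $\rightarrow$; there is no $\bot$. Its Natural Deduction system (Prawitz style) has only two rules: $\rightarrow$-Introduction (from a derivation of $\beta$, possibly using assumptions $\alpha$, infer $\alpha\rightarrow\beta$, discharging any number, possibly zero, of occurrences of the assumption $\alpha$) and $\rightarrow$-Elimination (from $\alpha$ and $\alpha\rightarrow\beta$ infer $\beta$; $\alpha\rightarrow\beta$ is the major premise, $\alpha$ the minor premise). A proof is a derivation with no open assumptions. A derivation is normal if no formula occurrence is both the conclusion of an $\rightarrow$-Introduction and the major premise of an $\rightarrow$-Elimination. An assumption occurrence is a leaf (top-formula occurrence) of the derivation tree. For formulas $X,Y$ let $\chi[X,Y]=(((X\rightarrow Y)\rightarrow X)\rightarrow X)\rightarrow Y$. Let $C$ and $D_1,D_2,\dots$ be distinct propositional letters. Define $\xi_1=\chi[D_1,C]$, $\xi_{i+1}=\chi[D_{i+1},\xi_i]$ for $i\ge 1$, and $\varphi_i=\xi_i\rightarrow C$ for $i\ge 1$. *)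

theory Defs
  imports Main
begin

datatype form = Atom nat | Imp form form  (infixr "\<rightarrow>\<^sub>f" 55)

definition C :: form where "C = Atom 0"
definition D :: "nat \<Rightarrow> form" where "D i = Atom i"

definition chi :: "form \<Rightarrow> form \<Rightarrow> form" where
  "chi X Y = ((((X \<rightarrow>\<^sub>f Y) \<rightarrow>\<^sub>f X) \<rightarrow>\<^sub>f X) \<rightarrow>\<^sub>f Y)"

fun xi :: "nat \<Rightarrow> form" where
  "xi 0 = C" (* unused; the statement only concerns i > 0 *)
| "xi (Suc 0) = chi (D 1) C"
| "xi (Suc (Suc n)) = chi (D (Suc (Suc n))) (xi (Suc n))"

definition phi :: "nat \<Rightarrow> form" where
  "phi i = (xi i \<rightarrow>\<^sub>f C)"

text \<open>Assumption leaves carry a discharge label. ImpI x a d concludes a -> (concl d),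
  discharging exactly the open leaves Assm x a of d (any number, possibly zero, of
  occurrences of a, since labels can be chosen freely). ImpE d1 d2 has minor premise d1
  and major premise d2.\<close>

datatype deriv = Assm nat form | ImpI nat form deriv | ImpE deriv deriv

fun concl :: "deriv \<Rightarrow> form" where
  "concl (Assm x a) = a"
| "concl (ImpI x a d) = (a \<rightarrow>\<^sub>f concl d)"
| "concl (ImpE d1 d2) = (case concl d2 of Imp a b \<Rightarrow> b | Atom n \<Rightarrow> Atom n)"

fun wf :: "deriv \<Rightarrow> bool" where
  "wf (Assm x a) = True"
| "wf (ImpI x a d) = wf d"
| "wf (ImpE d1 d2) = (wf d1 \<and> wf d2 \<and> (\<exists>b. concl d2 = (concl d1 \<rightarrow>\<^sub>f b)))"

fun open_assms :: "deriv \<Rightarrow> (nat \<times> form) set" where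
  "open_assms (Assm x a) = {(x, a)}"
| "open_assms (ImpI x a d) = open_assms d - {(x, a)}"
| "open_assms (ImpE d1 d2) = open_assms d1 \<union> open_assms d2"

definition is_proof_of :: "deriv \<Rightarrow> form \<Rightarrow> bool" where
  "is_proof_of d a \<longleftrightarrow> wf d \<and> open_assms d = {} \<and> concl d = a"

fun normal :: "deriv \<Rightarrow> bool" where
  "normal (Assm x a) = True"
| "normal (ImpI x a d) = normal d"
| "normal (ImpE d1 d2) = (normal d1 \<and> normal d2 \<and> (\<forall>x a d. d2 \<noteq> ImpI x a d))"

fun assm_count :: "form \<Rightarrow> deriv \<Rightarrow> nat" where
  "assm_count a (Assm x b) = (if b = a then 1 else 0)"
| "assm_count a (ImpI x b d) = assm_count a d"
| "assm_count a (ImpE d1 d2) = assm_count a d1 + assm_count a d2"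

end

theory Submission
  imports Defs
begin

definition Ef :: "nat \<Rightarrow> form" where "Ef k = (D k \<rightarrow>\<^sub>f xi (k - 1))"
definition Bf :: "nat \<Rightarrow> form" where "Bf k = (Ef k \<rightarrow>\<^sub>f D k)"
definition Af :: "nat \<Rightarrow> form" where "Af k = (Bf k \<rightarrow>\<^sub>f D k)"

lemma xi_Suc: "xi (Suc n) = (Af (Suc n) \<rightarrow>\<^sub>f xi n)"
  by (cases n) (simp_all add: chi_def Af_def Bf_def Ef_def)

lemma xi_eq_Atom: "(xi m = Atom n) \<longleftrightarrow> (m = 0 \<and> n = 0)"
  by (cases m) (auto simp: xi_Suc C_def)
lemma Atom_eq_xi: "(Atom n = xi m) \<longleftrightarrow> (m = 0 \<and> n = 0)"
  using xi_eq_Atom by metis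
lemma xi_eq_Imp: "(xi m = (a \<rightarrow>\<^sub>f b)) \<longleftrightarrow> (m \<noteq> 0 \<and> a = Af m \<and> b = xi (m - 1))"
  by (cases m) (auto simp: xi_Suc C_def)
lemma Imp_eq_xi: "((a \<rightarrow>\<^sub>f b) = xi m) \<longleftrightarrow> (m \<noteq> 0 \<and> a = Af m \<and> b = xi (m - 1))"
  using xi_eq_Imp by metis
lemma xi_inj: "(xi m = xi n) \<longleftrightarrow> m = n"
proof (induction m arbitrary: n)
  case 0 then show ?case by (cases n) (auto simp: xi_Suc C_def)
next
  case (Suc m) then show ?case by (cases n) (auto simp: xi_Suc C_def Af_def Bf_def Ef_def D_def)
qed

lemmas fs = Af_def Bf_def Ef_def D_def C_def xi_eq_Atom Atom_eq_xi xi_eq_Imp Imp_eq_xi xi_inj phi_def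

lemma test1: "k \<ge> 1 \<Longrightarrow> xi m \<noteq> Af k \<and> xi m \<noteq> Bf k \<and> xi m \<noteq> Ef k \<and> xi m \<noteq> D k"
  by (auto simp: fs)

definition Hyps :: "nat \<Rightarrow> form set" where
  "Hyps i = insert (xi i) (\<Union>k\<in>{1..i}. {Af k, Bf k, Ef k, D k})"

definition valid :: "nat \<Rightarrow> form set \<Rightarrow> bool" where
  "valid i G \<longleftrightarrow> G \<subseteq> Hyps i \<and> (\<forall>k. Ef k \<in> G \<longrightarrow> Af k \<in> G) \<and> (\<forall>k. D k \<in> G \<longrightarrow> Bf k \<in> G)"

definition nfree :: "nat \<Rightarrow> form set \<Rightarrow> nat \<Rightarrow> nat" where
  "nfree i G m = card {k. m < k \<and> k \<le> i \<and> Af k \<notin> G \<and> D k \<notin> G}"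

definition bad :: "form set \<Rightarrow> bool" where
  "bad G \<longleftrightarrow> (\<exists>k. Ef k \<in> G \<and> Bf k \<in> G)"

datatype gl = GX nat | GA nat | GB nat | GE nat | GD nat | GP

fun gf :: "nat \<Rightarrow> gl \<Rightarrow> form" where
  "gf i (GX m) = xi m"
| "gf i (GA k) = Af k"
| "gf i (GB k) = Bf k"
| "gf i (GE k) = Ef k"
| "gf i (GD k) = D k"
| "gf i GP = phi i"

fun validg :: "nat \<Rightarrow> gl \<Rightarrow> bool" where
  "validg i (GX m) = (m \<le> i)"
| "validg i GP = True"
| "validg i (GA k) = (1 \<le> k \<and> k \<le> i)"
| "validg i (GB k) = (1 \<le> k \<and> k \<le> i)"
| "validg i (GE k) = (1 \<le> k \<and> k \<le> i)"
| "validg i (GD k) = (1 \<le> k \<and> k \<le> i)"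

fun Lg :: "nat \<Rightarrow> form set \<Rightarrow> gl \<Rightarrow> nat" where
  "Lg i G (GX m) = (if bad G then 0 else 2 ^ nfree i G m)"
| "Lg i G GP = (if bad G then 0 else 2 ^ nfree i G 0)"
| "Lg i G (GA k) = (if bad G \<or> Af k \<in> G \<or> D k \<in> G then 0 else 2 ^ nfree i G k)"
| "Lg i G (GD k) = (if bad G \<or> D k \<in> G \<or> (Bf k \<in> G \<and> Af k \<in> G) then 0
      else if Bf k \<in> G then 2 ^ nfree i G k else 2 ^ i)"
| "Lg i G (GB k) = (if bad G \<or> Bf k \<in> G \<or> Af k \<notin> G then 0 else 2 ^ i)"
| "Lg i G (GE k) = (if bad G \<or> Ef k \<in> G \<or> Bf k \<notin> G then 0 else 2 ^ nfree i G k)"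

inductive tail :: "form \<Rightarrow> form \<Rightarrow> bool" where
  tail_refl: "tail h h"
| tail_step: "tail h (a \<rightarrow>\<^sub>f b) \<Longrightarrow> tail h b"

lemma nfree_le: "nfree i G m \<le> i"
proof -
  have "{k. m < k \<and> k \<le> i \<and> Af k \<notin> G \<and> D k \<notin> G} \<subseteq> {1..i}" by auto
  then have "nfree i G m \<le> card {1..i}" unfolding nfree_def by (intro card_mono) auto
  then show ?thesis by simp
qed

lemma nfree_top: "nfree i G i = 0"
  unfolding nfree_def by simp

lemma nfree_pred: assumes "1 \<le> m" "m \<le> i"
  shows "nfree i G (m - 1) = nfree i G m + (if Af m \<notin> G \<and> D m \<notin> G then 1 else 0)"
proof -
  let ?S = "{k. m < k \<and> k \<le> i \<and> Af k \<notin> G \<and> D k \<notin> G}"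
  have fin: "finite ?S" by (rule finite_subset[of _ "{..i}"]) auto
  show ?thesis
  proof (cases "Af m \<notin> G \<and> D m \<notin> G")
    case True
    then have "{k. m - 1 < k \<and> k \<le> i \<and> Af k \<notin> G \<and> D k \<notin> G} = insert m ?S" using assms by auto
    then show ?thesis using True fin unfolding nfree_def by simp
  next
    case False
    then have "{k. m - 1 < k \<and> k \<le> i \<and> Af k \<notin> G \<and> D k \<notin> G} = ?S" using assms False by (auto; (case_tac "x = m"; auto))
    then show ?thesis using False unfolding nfree_def by simp
  qed
qed

lemma nfree_cong: assumes "\<And>k. m < k \<Longrightarrow> k \<le> i \<Longrightarrow> (Af k \<in> G' \<longleftrightarrow> Af k \<in> G) \<and> (D k \<in> G' \<longleftrightarrow> D k \<in> G)"
  shows "nfree i G' m = nfree i G m"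
proof -
  have "{k. m < k \<and> k \<le> i \<and> Af k \<notin> G' \<and> D k \<notin> G'} = {k. m < k \<and> k \<le> i \<and> Af k \<notin> G \<and> D k \<notin> G}"
    using assms by blast
  then show ?thesis unfolding nfree_def by simp
qed

lemma nfree_0: "nfree i {} 0 = i"
proof -
  have "{k. 0 < k \<and> k \<le> i \<and> Af k \<notin> {} \<and> D k \<notin> {}} = {1..i}" by auto
  then show ?thesis unfolding nfree_def by simp
qed

lemma tail_xi: "tail h F \<Longrightarrow> h = xi n \<Longrightarrow> \<exists>m\<le>n. F = xi m"
proof (induction rule: tail.induct)
  case (tail_refl h) then show ?case by auto
next
  case (tail_step h a b)
  then obtain m where "m \<le> n" "(a \<rightarrow>\<^sub>f b) = xi m" by auto
  then show ?case by (auto simp: Imp_eq_xi intro!: exI[of _ "m - 1"])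
qed

lemma tail_Af: "tail h F \<Longrightarrow> h = Af k \<Longrightarrow> F = Af k \<or> F = D k"
  by (induction rule: tail.induct) (auto simp: Af_def D_def)
lemma tail_Bf: "tail h F \<Longrightarrow> h = Bf k \<Longrightarrow> F = Bf k \<or> F = D k"
  by (induction rule: tail.induct) (auto simp: Bf_def D_def)
lemma tail_D: "tail h F \<Longrightarrow> h = D k \<Longrightarrow> F = D k"
  by (induction rule: tail.induct) (auto simp: D_def)
lemma tail_Ef: "tail h F \<Longrightarrow> h = Ef k \<Longrightarrow> F = Ef k \<or> (\<exists>m\<le>k - 1. F = xi m)"
proof (induction rule: tail.induct)
  case (tail_refl h) then show ?case by auto
next
  case (tail_step h a b)
  then have "(a \<rightarrow>\<^sub>f b) = Ef k \<or> (\<exists>m\<le>k - 1. (a \<rightarrow>\<^sub>f b) = xi m)" by auto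
  then show ?case
  proof
    assume "(a \<rightarrow>\<^sub>f b) = Ef k" then show ?thesis by (auto simp: Ef_def)
  next
    assume "\<exists>m\<le>k - 1. (a \<rightarrow>\<^sub>f b) = xi m"
    then obtain m where "m \<le> k - 1" "(a \<rightarrow>\<^sub>f b) = xi m" by auto
    then show ?thesis by (auto simp: Imp_eq_xi intro!: exI[of _ "m - 1"])
  qed
qed

lemma Hyps_cases: "h \<in> Hyps i \<Longrightarrow> h = xi i \<or> (\<exists>k. 1 \<le> k \<and> k \<le> i \<and> (h = Af k \<or> h = Bf k \<or> h = Ef k \<or> h = D k))"
  unfolding Hyps_def by auto

lemma ineqX: "1 \<le> m \<Longrightarrow> m \<le> i \<Longrightarrow> Lg i G (GX (m - 1)) \<le> Lg i G (GX m) + Lg i G (GA m)"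
  using nfree_pred[of m i G] by auto

lemma ineqA: "Af k \<in> G \<Longrightarrow> Lg i G (GD k) \<le> Lg i G (GA k) + Lg i G (GB k)"
  using nfree_le[of i G k] by (auto simp: power_increasing)

lemma ineqB: "Bf k \<in> G \<Longrightarrow> Lg i G (GD k) \<le> Lg i G (GB k) + Lg i G (GE k)"
  by (auto simp: bad_def)

lemma ineqE: "valid i G \<Longrightarrow> Ef k \<in> G \<Longrightarrow> Lg i G (GX (k - 1)) \<le> Lg i G (GE k) + Lg i G (GD k)"
  using nfree_le[of i G "k - 1"] by (auto simp: valid_def bad_def power_increasing)

lemma gf_xi: "0 < i \<Longrightarrow> validg i g \<Longrightarrow> gf i g = xi n \<Longrightarrow> g = GX n"
  by (cases g) (auto simp: fs)
lemma gf_D: "0 < i \<Longrightarrow> 1 \<le> k \<Longrightarrow> validg i g \<Longrightarrow> gf i g = D k \<Longrightarrow> g = GD k"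
  by (cases g) (auto simp: fs)

lemma step:
  assumes i: "0 < i" and v: "valid i G" and h: "h \<in> G" and t: "tail h (a \<rightarrow>\<^sub>f b)"
    and g: "validg i g" "gf i g = b"
  shows "\<exists>g' g''. validg i g' \<and> gf i g' = (a \<rightarrow>\<^sub>f b) \<and> validg i g'' \<and> gf i g'' = a
     \<and> Lg i G g \<le> Lg i G g' + Lg i G g''"
proof -
  have hH: "h \<in> Hyps i" using v h by (auto simp: valid_def)
  have X: ?thesis if m: "m \<le> i" "(a \<rightarrow>\<^sub>f b) = xi m" for m
  proof -
    have m0: "m \<noteq> 0" "a = Af m" "b = xi (m - 1)" using m(2) by (auto simp: Imp_eq_xi)
    then have "g = GX (m - 1)" using gf_xi[OF i g(1)] g(2) by auto
    then have "Lg i G g \<le> Lg i G (GX m) + Lg i G (GA m)" using ineqX[of m i G] m m0 by simp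
    moreover have "validg i (GX m) \<and> gf i (GX m) = (a \<rightarrow>\<^sub>f b) \<and> validg i (GA m) \<and> gf i (GA m) = a"
      using m m0 by simp
    ultimately show ?thesis by blast
  qed
  from Hyps_cases[OF hH] show ?thesis
  proof (elim disjE exE conjE)
    assume "h = xi i"
    then obtain m where "m \<le> i" "(a \<rightarrow>\<^sub>f b) = xi m" using tail_xi[OF t] by auto
    then show ?thesis using X by auto
  next
    fix k assume k: "1 \<le> k" "k \<le> i" "h = Af k"
    then have eq: "(a \<rightarrow>\<^sub>f b) = Af k" using tail_Af[OF t] by (auto simp: D_def)
    then have ab: "a = Bf k" "b = D k" by (auto simp: Af_def)
    then have "g = GD k" using gf_D[OF i k(1) g(1)] g(2) by auto
    then have "Lg i G g \<le> Lg i G (GA k) + Lg i G (GB k)" using ineqA[of k G i] k h by simp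
    moreover have "validg i (GA k) \<and> gf i (GA k) = (a \<rightarrow>\<^sub>f b) \<and> validg i (GB k) \<and> gf i (GB k) = a"
      using k eq ab by simp
    ultimately show ?thesis by blast
  next
    fix k assume k: "1 \<le> k" "k \<le> i" "h = Bf k"
    then have eq: "(a \<rightarrow>\<^sub>f b) = Bf k" using tail_Bf[OF t] by (auto simp: D_def)
    then have ab: "a = Ef k" "b = D k" by (auto simp: Bf_def)
    then have "g = GD k" using gf_D[OF i k(1) g(1)] g(2) by auto
    then have "Lg i G g \<le> Lg i G (GB k) + Lg i G (GE k)" using ineqB[of k G i] k h by simp
    moreover have "validg i (GB k) \<and> gf i (GB k) = (a \<rightarrow>\<^sub>f b) \<and> validg i (GE k) \<and> gf i (GE k) = a"
      using k eq ab by simp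
    ultimately show ?thesis by blast
  next
    fix k assume k: "1 \<le> k" "k \<le> i" "h = Ef k"
    then have "(a \<rightarrow>\<^sub>f b) = Ef k \<or> (\<exists>m\<le>k - 1. (a \<rightarrow>\<^sub>f b) = xi m)" using tail_Ef[OF t] by auto
    then show ?thesis
    proof
      assume eq: "(a \<rightarrow>\<^sub>f b) = Ef k"
      then have ab: "a = D k" "b = xi (k - 1)" by (auto simp: Ef_def)
      then have "g = GX (k - 1)" using gf_xi[OF i g(1)] g(2) by auto
      then have "Lg i G g \<le> Lg i G (GE k) + Lg i G (GD k)" using ineqE[OF v, of k] k h by simp
      moreover have "validg i (GE k) \<and> gf i (GE k) = (a \<rightarrow>\<^sub>f b) \<and> validg i (GD k) \<and> gf i (GD k) = a"
        using k eq ab by simp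
      ultimately show ?thesis by blast
    next
      assume "\<exists>m\<le>k - 1. (a \<rightarrow>\<^sub>f b) = xi m"
      then obtain m where "m \<le> k - 1" "(a \<rightarrow>\<^sub>f b) = xi m" by auto
      then show ?thesis using X k by auto
    qed
  next
    fix k assume k: "1 \<le> k" "k \<le> i" "h = D k"
    then have "(a \<rightarrow>\<^sub>f b) = D k" using tail_D[OF t] by auto
    then show ?thesis by (simp add: D_def)
  qed
qed

lemma base:
  assumes i: "0 < i" and v: "valid i G" and h: "h \<in> G" and g: "validg i g" "gf i g = h"
  shows "Lg i G g \<le> (if h = xi i then 1 else 0)"
proof -
  have hH: "h \<in> Hyps i" using v h by (auto simp: valid_def)
  show ?thesis
  proof (cases g)
    case (GX m)
    then have "xi m \<in> Hyps i" using hH g by auto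
    then have "m = i" using Hyps_cases[of "xi m" i] by (auto simp: fs)
    then show ?thesis using GX g by (auto simp: nfree_top)
  next
    case GP
    then have "phi i \<in> Hyps i" using hH g by auto
    then show ?thesis using Hyps_cases[of "phi i" i] i by (auto simp: fs)
  qed (use g h in auto)
qed

lemma distinct_forms [simp]:
  "D k \<noteq> Bf k'" "Bf k' \<noteq> D k" "D k \<noteq> Af k'" "Af k' \<noteq> D k" "D k \<noteq> Ef k'" "Ef k' \<noteq> D k"
  "Af k \<noteq> Bf k'" "Bf k' \<noteq> Af k" "Af k \<noteq> Ef k'" "Ef k' \<noteq> Af k" "Bf k \<noteq> Ef k'" "Ef k' \<noteq> Bf k"
  by (auto simp: fs)

lemma bad_ins_A: "bad (insert (Af m) G) = bad G" by (auto simp: bad_def fs)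
lemma bad_ins_D: "bad (insert (D m) G) = bad G" by (auto simp: bad_def fs)
lemma bad_ins_xi: "0 < i \<Longrightarrow> bad (insert (xi i) G) = bad G" by (auto simp: bad_def fs)
lemma bad_ins_B: "bad (insert (Bf k) G) = (bad G \<or> Ef k \<in> G)" by (auto simp: bad_def fs)
lemma bad_ins_E: "bad (insert (Ef k) G) = (bad G \<or> Bf k \<in> G)" by (auto simp: bad_def fs)

lemma nfree_ins_B: "nfree i (insert (Bf k) G) m = nfree i G m"
  by (rule nfree_cong) (auto simp: fs)
lemma nfree_ins_E: "nfree i (insert (Ef k) G) m = nfree i G m"
  by (rule nfree_cong) (auto simp: fs)
lemma nfree_ins_xi: "0 < i \<Longrightarrow> nfree i (insert (xi i) G) m = nfree i G m"
  by (rule nfree_cong) (auto simp: fs)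
lemma nfree_ins_A: "j \<le> m \<Longrightarrow> nfree i (insert (Af j) G) m = nfree i G m"
  by (rule nfree_cong) (auto simp: fs)
lemma nfree_ins_D: "j \<le> m \<Longrightarrow> nfree i (insert (D j) G) m = nfree i G m"
  by (rule nfree_cong) (auto simp: fs)

lemma impI_case:
  assumes i: "0 < i" and v: "valid i G" and g: "validg i g" "gf i g = (a \<rightarrow>\<^sub>f c)"
    and pos: "0 < Lg i G g"
  shows "\<exists>g'. validg i g' \<and> gf i g' = c \<and> valid i (insert a G) \<and> Lg i G g \<le> Lg i (insert a G) g'"
proof (cases g)
  case (GX m)
  then have m: "m \<noteq> 0" "a = Af m" "c = xi (m - 1)" "m \<le> i" using g by (auto simp: xi_eq_Imp)
  have va: "valid i (insert a G)" using v m unfolding valid_def Hyps_def by (auto simp: fs)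
  have "nfree i (insert a G) (m - 1) = nfree i G m"
    using nfree_pred[of m i "insert a G"] m nfree_ins_A[of m m i G] by simp
  then have "Lg i G g \<le> Lg i (insert a G) (GX (m - 1))" using GX m bad_ins_A by simp
  then show ?thesis using va m by (intro exI[of _ "GX (m - 1)"]) simp
next
  case (GA k)
  then have k: "a = Bf k" "c = D k" "1 \<le> k" "k \<le> i" using g by (auto simp: Af_def)
  have va: "valid i (insert a G)" using v k unfolding valid_def Hyps_def by (auto simp: fs)
  have "Lg i G g \<le> Lg i (insert a G) (GD k)"
    using GA k v by (auto simp: bad_ins_B nfree_ins_B valid_def)
  then show ?thesis using va k by (intro exI[of _ "GD k"]) simp
next
  case (GB k)
  then have k: "a = Ef k" "c = D k" "1 \<le> k" "k \<le> i" using g by (auto simp: Bf_def)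
  have p: "Af k \<in> G" "Bf k \<notin> G" "\<not> bad G" using pos GB by (auto split: if_splits)
  have va: "valid i (insert a G)" using v k p unfolding valid_def Hyps_def by (auto simp: fs)
  have "D k \<notin> G" using v p by (auto simp: valid_def)
  then have "Lg i G g \<le> Lg i (insert a G) (GD k)"
    using GB k p by (simp add: bad_ins_E)
  then show ?thesis using va k by (intro exI[of _ "GD k"]) simp
next
  case (GE k)
  then have k: "a = D k" "c = xi (k - 1)" "1 \<le> k" "k \<le> i" using g by (auto simp: Ef_def)
  have p: "Bf k \<in> G" "Ef k \<notin> G" "\<not> bad G" using pos GE by (auto split: if_splits)
  have va: "valid i (insert a G)" using v k p unfolding valid_def Hyps_def by (auto simp: fs)
  have "nfree i (insert a G) (k - 1) = nfree i G k"
    using nfree_pred[of k i "insert a G"] k nfree_ins_D[of k k i G] by simp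
  then have "Lg i G g \<le> Lg i (insert a G) (GX (k - 1))" using GE k p bad_ins_D by simp
  then show ?thesis using va k by (intro exI[of _ "GX (k - 1)"]) simp
next
  case (GD k)
  then show ?thesis using g by (simp add: D_def)
next
  case GP
  then have k: "a = xi i" "c = xi 0" using g by (auto simp: phi_def C_def)
  have va: "valid i (insert a G)" using v k i unfolding valid_def Hyps_def by (auto simp: fs)
  have "Lg i G g \<le> Lg i (insert a G) (GX 0)" using GP k i by (simp add: bad_ins_xi nfree_ins_xi)
  then show ?thesis using va k by (intro exI[of _ "GX 0"]) simp
qed

lemma main:
  assumes i: "0 < i"
  shows "wf d \<Longrightarrow> normal d \<Longrightarrow> valid i G \<Longrightarrow> snd ` open_assms d \<subseteq> G \<Longrightarrow>
   (\<forall>g. validg i g \<and> gf i g = concl d \<longrightarrow> Lg i G g \<le> assm_count (xi i) d) \<and>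
   ((\<forall>x a d'. d \<noteq> ImpI x a d') \<longrightarrow> (\<exists>h\<in>G. tail h (concl d)))"
proof (induction d arbitrary: G)
  case (Assm x a)
  then have aG: "a \<in> G" by auto
  have "Lg i G g \<le> assm_count (xi i) (Assm x a)" if "validg i g" "gf i g = a" for g
    using base[OF i Assm(3) aG that] by auto
  then show ?case using aG tail_refl by auto
next
  case (ImpI x a d)
  have "Lg i G g \<le> assm_count (xi i) (ImpI x a d)" if g: "validg i g" "gf i g = concl (ImpI x a d)" for g
  proof (cases "Lg i G g = 0")
    case False
    then obtain g' where g': "validg i g'" "gf i g' = concl d" "valid i (insert a G)"
        "Lg i G g \<le> Lg i (insert a G) g'"
      using impI_case[OF i ImpI(4) g(1)] g(2) by auto
    have "snd ` open_assms d \<subseteq> insert a G"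
    proof
      fix y assume "y \<in> snd ` open_assms d"
      then obtain p where p: "p \<in> open_assms d" "y = snd p" by auto
      show "y \<in> insert a G" using ImpI(5) p by (cases "p = (x, a)") auto
    qed
    then have "Lg i (insert a G) g' \<le> assm_count (xi i) d"
      using ImpI.IH[of "insert a G"] ImpI(2,3) g'(1,2,3) by auto
    then show ?thesis using g'(4) by simp
  qed simp
  then show ?case by auto
next
  case (ImpE d1 d2)
  from ImpE(3) obtain b where b: "concl d2 = (concl d1 \<rightarrow>\<^sub>f b)" "wf d1" "wf d2" by auto
  have cb: "concl (ImpE d1 d2) = b" using b by simp
  have n: "normal d1" "normal d2" "\<forall>x a d'. d2 \<noteq> ImpI x a d'" using ImpE(4) by auto
  have o: "snd ` open_assms d1 \<subseteq> G" "snd ` open_assms d2 \<subseteq> G" using ImpE(6) by auto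
  have IH1: "\<forall>g. validg i g \<and> gf i g = concl d1 \<longrightarrow> Lg i G g \<le> assm_count (xi i) d1"
    using ImpE.IH(1)[OF b(2) n(1) ImpE(5) o(1)] by blast
  have IH2: "\<forall>g. validg i g \<and> gf i g = concl d2 \<longrightarrow> Lg i G g \<le> assm_count (xi i) d2"
    and T: "\<exists>h\<in>G. tail h (concl d2)"
    using ImpE.IH(2)[OF b(3) n(2) ImpE(5) o(2)] n(3) by blast+
  from T obtain h where h: "h \<in> G" "tail h (concl d1 \<rightarrow>\<^sub>f b)" using b by auto
  have "Lg i G g \<le> assm_count (xi i) (ImpE d1 d2)" if g: "validg i g" "gf i g = b" for g
  proof -
    obtain g' g'' where gg: "validg i g'" "gf i g' = (concl d1 \<rightarrow>\<^sub>f b)" "validg i g''" "gf i g'' = concl d1"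
      "Lg i G g \<le> Lg i G g' + Lg i G g''"
      using step[OF i ImpE(5) h g] by blast
    have "Lg i G g' \<le> assm_count (xi i) d2" using IH2 gg b by auto
    moreover have "Lg i G g'' \<le> assm_count (xi i) d1" using IH1 gg by auto
    ultimately show ?thesis using gg(5) by simp
  qed
  moreover have "tail h b" using h(2) by (rule tail_step)
  ultimately show ?case using cb h(1) by metis
qed

theorem mainTheorem1:
  fixes i :: nat and d :: deriv
  assumes "i > 0" and "is_proof_of d (phi i)" and "normal d"
  shows "2 ^ i \<le> assm_count (xi i) d"
proof -
  have d: "wf d" "open_assms d = {}" "concl d = phi i" using assms(2) by (auto simp: is_proof_of_def)
  have v: "valid i {}" by (simp add: valid_def)
  have o: "snd ` open_assms d \<subseteq> {}" using d(2) by simp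
  have "\<forall>g. validg i g \<and> gf i g = concl d \<longrightarrow> Lg i {} g \<le> assm_count (xi i) d"
    using main[OF assms(1) d(1) assms(3) v o] by blast
  then have "Lg i {} GP \<le> assm_count (xi i) d" using d(3) validg.simps(2) gf.simps(6) by metis
  moreover have "Lg i {} GP = 2 ^ i" by (simp add: bad_def nfree_0)
  ultimately show ?thesis by simp
qed

end
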